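(* Let $\tau\in\mathbb R$ and let $(\vartheta(s),\omega(s))$, $s\in J$ ($J$ an interval containing $0$), be a $C^1$ solution with $\vartheta(s)\in(-\pi/2,\pi/2)$ of $\dot\vartheta=\omega$, $\dot\omega=-\tau^2\tan\vartheta/\cos^2\vartheta$ with $\vartheta(0)=0$; let $E\ge0$ with $E^2=\omega^2+\tau^2\tan^2\vartheta$ (constant along the solution), assume $E^2+\tau^2>0$ and put $\Omega=\sqrt{E^2+\tau^2}$. Let $\varphi(s)$ satisfy $\dot\varphi(s)=\tau\tan^2\vartheta(s)$ on $J$. Then $$\varphi(s)-\varphi(0)=A(s)-\tau s\qquad(s\in J),$$ where $A$ is the continuous function on $J$ with $A(0)=0$ and $\tan A(s)=\frac{\tau}{\Omega}\tan(\Omega s)$ whenever $\cos(\Omega s)\ne0$ (i.e. $A(s)=\tan^{-1}\big(\frac{\tau}{\Omega}\tan\Omega s\big)$ continued continuously). *)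

theory Defs
  imports "HOL-Analysis.Analysis"
begin

definition continuous_arctan_branch :: "real set \<Rightarrow> real \<Rightarrow> real \<Rightarrow> (real \<Rightarrow> real) \<Rightarrow> bool" where
  "continuous_arctan_branch J \<tau> \<Omega> A \<longleftrightarrow>
     continuous_on J A \<and> A 0 = 0 \<and>
     (\<forall>s\<in>J. cos (\<Omega> * s) \<noteq> 0 \<longrightarrow> tan (A s) = (\<tau> / \<Omega>) * tan (\<Omega> * s))"

end

theory Submission
  imports Defs
begin

lemma alg0:
  fixes a b c t W \<tau> D k :: real
  assumes "c\<^sup>2 + t\<^sup>2 = 1" "D = W\<^sup>2 * c\<^sup>2 + \<tau>\<^sup>2 * t\<^sup>2" "k * D = \<tau> * W\<^sup>2"
  shows "2 * ((a * k * W * c + - t * W * (W * b) - (- b * k * \<tau> * t + c * W * (\<tau> * a))) * (W * b * c - \<tau> * a * t)) * D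
     - (W * b * c - \<tau> * a * t)\<^sup>2 * (2 * (- t * W * c) * W\<^sup>2 + 2 * (c * W * t) * \<tau>\<^sup>2) = 0"
  using assms by algebra

lemma alg:
  fixes a b c t W \<tau> D :: real
  assumes "c\<^sup>2 + t\<^sup>2 = 1" "D = W\<^sup>2 * c\<^sup>2 + \<tau>\<^sup>2 * t\<^sup>2" "D \<noteq> 0"
  shows "2 * ((a * (\<tau> * W\<^sup>2 / D) * W * c + - t * W * (W * b) - (- b * (\<tau> * W\<^sup>2 / D) * \<tau> * t + c * W * (\<tau> * a))) * (W * b * c - \<tau> * a * t)) * D
     - (W * b * c - \<tau> * a * t)\<^sup>2 * (2 * (- t * W * c) * W\<^sup>2 + 2 * (c * W * t) * \<tau>\<^sup>2) = 0"
  by (rule alg0[OF assms(1,2)]) (use assms(3) in simp)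

lemma Qalg0:
  fixes s0 c0 k W E \<tau> w :: real
  assumes "s0 = k * c0" "s0\<^sup>2 + c0\<^sup>2 = 1" "W\<^sup>2 = E\<^sup>2 + \<tau>\<^sup>2" "E\<^sup>2 = w\<^sup>2 + \<tau>\<^sup>2 * k\<^sup>2"
  shows "c0 * (W * W * s0) = \<tau>\<^sup>2 * k + c0 * (s0 * w * w)"
  using assms by algebra

lemma Qalg:
  fixes t W E \<tau> w :: real
  assumes "cos t \<noteq> 0" "W\<^sup>2 = E\<^sup>2 + \<tau>\<^sup>2" "E\<^sup>2 = w\<^sup>2 + \<tau>\<^sup>2 * (tan t)\<^sup>2"
  shows "W * W * sin t = \<tau>\<^sup>2 * tan t * cos t / (cos t)\<^sup>2 + sin t * w * w"
proof -
  have h: "cos t * (W * W * sin t) = \<tau>\<^sup>2 * tan t + cos t * (sin t * w * w)"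
    by (rule Qalg0[OF _ _ assms(2,3)]) (use assms(1) in \<open>simp_all add: tan_def\<close>)
  have e: "\<tau>\<^sup>2 * tan t * cos t / (cos t)\<^sup>2 = \<tau>\<^sup>2 * tan t / cos t"
    by (simp add: power2_eq_square)
  have "W * W * sin t = (cos t * (W * W * sin t)) / cos t" using assms(1) by simp
  also have "\<dots> = (\<tau>\<^sup>2 * tan t + cos t * (sin t * w * w)) / cos t" using h by simp
  also have "\<dots> = \<tau>\<^sup>2 * tan t / cos t + sin t * w * w" using assms(1) by (simp add: add_divide_distrib)
  finally show ?thesis unfolding e .
qed

lemma Qfin:
  fixes W p R M c w cW sW s :: real
  assumes "W * W * p = R + p * w * w" "M = - R"
  shows "(0 * p + c * w * W) * cW + - sW * (0 * s + 1 * W) * (W * p) -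
     ((M + - p * w * w) * sW + cW * (0 * s + 1 * W) * (w * c)) = 0"
  using assms by algebra

lemma L2alg:
  fixes p cth k c sg W E \<tau> w :: real
  assumes "p = k * cth" "p\<^sup>2 + cth\<^sup>2 = 1" "W\<^sup>2 = E\<^sup>2 + \<tau>\<^sup>2" "E\<^sup>2 = w\<^sup>2 + \<tau>\<^sup>2 * k\<^sup>2"
    "c\<^sup>2 + sg\<^sup>2 = 1" "W * p * c - w * cth * sg = 0"
  shows "W\<^sup>2 * p\<^sup>2 = E\<^sup>2 * sg\<^sup>2"
  using assms by algebra

lemma L3alg:
  fixes p cth c sg W E \<tau> :: real
  assumes "p\<^sup>2 + cth\<^sup>2 = 1" "W\<^sup>2 = E\<^sup>2 + \<tau>\<^sup>2" "c\<^sup>2 + sg\<^sup>2 = 1" "W\<^sup>2 * p\<^sup>2 = E\<^sup>2 * sg\<^sup>2"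
  shows "W\<^sup>2 * c\<^sup>2 + \<tau>\<^sup>2 * sg\<^sup>2 = W\<^sup>2 * cth\<^sup>2"
  using assms by algebra

theorem lemma4p15:
  fixes \<tau> E :: real and J :: "real set" and th om ph :: "real \<Rightarrow> real"
  assumes J: "is_interval J" "0 \<in> J"
    and range: "\<And>s. s \<in> J \<Longrightarrow> th s \<in> {-pi/2 <..< pi/2}"
    and ode1: "\<And>s. s \<in> J \<Longrightarrow> (th has_real_derivative om s) (at s within J)"
    and ode2: "\<And>s. s \<in> J \<Longrightarrow>
        (om has_real_derivative (- \<tau>\<^sup>2 * tan (th s) / (cos (th s))\<^sup>2)) (at s within J)"
    and init: "th 0 = 0"
    and E: "E \<ge> 0" "\<And>s. s \<in> J \<Longrightarrow> E\<^sup>2 = (om s)\<^sup>2 + \<tau>\<^sup>2 * (tan (th s))\<^sup>2"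
    and pos: "E\<^sup>2 + \<tau>\<^sup>2 > 0"
    and phi: "\<And>s. s \<in> J \<Longrightarrow> (ph has_real_derivative \<tau> * (tan (th s))\<^sup>2) (at s within J)"
  shows "(\<exists>A. continuous_arctan_branch J \<tau> (sqrt (E\<^sup>2 + \<tau>\<^sup>2)) A) \<and>
         (\<forall>A. continuous_arctan_branch J \<tau> (sqrt (E\<^sup>2 + \<tau>\<^sup>2)) A \<longrightarrow>
              (\<forall>s\<in>J. ph s - ph 0 = A s - \<tau> * s))"
proof -
  define W where "W = sqrt (E\<^sup>2 + \<tau>\<^sup>2)"
  have W0: "W > 0" using pos by (simp add: W_def)
  have W2: "W\<^sup>2 = E\<^sup>2 + \<tau>\<^sup>2" using pos by (simp add: W_def)
  have cosne: "cos (th s) \<noteq> 0" if "s \<in> J" for s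
    using range[OF that] cos_gt_zero_pi[of "th s"] by auto
  have convJ: "convex J" using J(1) is_interval_convex by blast
  define Q where "Q x = W * sin (th x) * cos (W * x) - om x * cos (th x) * sin (W * x)" for x
  have Qd: "(Q has_real_derivative 0) (at s within J)" if s: "s \<in> J" for s
    unfolding Q_def
    apply (rule derivative_eq_intros ode1[OF s] ode2[OF s] refl)+
    by (rule Qfin[OF Qalg[OF cosne[OF s] W2 E(2)[OF s]]]) simp
  obtain cQ where cQ: "\<forall>x\<in>J. Q x = cQ"
    using has_field_derivative_zero_constant[OF convJ Qd] by blast
  have Q0: "Q s = 0" if "s \<in> J" for s
  proof -
    have "Q 0 = 0" by (simp add: Q_def init)
    then show ?thesis using cQ that J(2) by metis
  qed
  have sinsq: "W\<^sup>2 * (sin (th s))\<^sup>2 = E\<^sup>2 * (sin (W * s))\<^sup>2" if s: "s \<in> J" for s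
  proof (rule L2alg[where k="tan (th s)" and c="cos (W * s)" and w = "om s" and cth="cos (th s)"])
    show "sin (th s) = tan (th s) * cos (th s)" using cosne[OF s] by (simp add: tan_def)
    show "W * sin (th s) * cos (W * s) - om s * cos (th s) * sin (W * s) = 0"
      using Q0[OF s] by (simp add: Q_def)
  qed (fact W2 | fact E(2)[OF s] | simp)+
  define D where "D x = W\<^sup>2 * (cos (W * x))\<^sup>2 + \<tau>\<^sup>2 * (sin (W * x))\<^sup>2" for x
  have DJ: "D s = W\<^sup>2 * (cos (th s))\<^sup>2" if s: "s \<in> J" for s
    unfolding D_def by (rule L3alg[OF _ W2 _ sinsq[OF s]]) simp_all
  have Dpos: "D s > 0" if s: "s \<in> J" for s
    using DJ[OF s] W0 cosne[OF s] by simp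
  define B where "B x = ph x - ph 0 + \<tau> * x" for x
  have Bd: "(B has_real_derivative (\<tau> * W\<^sup>2 / D s)) (at s within J)" if s: "s \<in> J" for s
  proof -
    have "(B has_real_derivative (\<tau> * (tan (th s))\<^sup>2 - 0 + (0 * s + 1 * \<tau>))) (at s within J)"
      unfolding B_def by (rule derivative_eq_intros phi[OF s] refl)+
    moreover have "\<tau> * (tan (th s))\<^sup>2 - 0 + (0 * s + 1 * \<tau>) = \<tau> * W\<^sup>2 / D s"
    proof -
      have "\<tau> * (tan (th s))\<^sup>2 - 0 + (0 * s + 1 * \<tau>) = \<tau> * (1 + (tan (th s))\<^sup>2)"
        by (simp add: algebra_simps)
      also have "\<dots> = \<tau> * (inverse (cos (th s)))\<^sup>2" using tan_sec[OF cosne[OF s]] by simp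
      also have "\<dots> = \<tau> * W\<^sup>2 / (W\<^sup>2 * (cos (th s))\<^sup>2)"
        using W0 cosne[OF s] by (simp add: power_inverse divide_simps)
      finally show ?thesis unfolding DJ[OF s] .
    qed
    ultimately show ?thesis by simp
  qed
  have two: "(2::nat) - Suc 0 = 1" by simp
  define H where "H x = W * sin (B x) * cos (W * x) - \<tau> * cos (B x) * sin (W * x)" for x
  have Gd: "((\<lambda>x. (H x)\<^sup>2 / D x) has_real_derivative 0) (at s within J)" if s: "s \<in> J" for s
    unfolding H_def D_def
    apply (rule derivative_eq_intros Bd[OF s, unfolded D_def] refl)+
    subgoal using Dpos[OF s] unfolding D_def by simp
    apply (rule divide_eq_0_iff[THEN iffD2, OF disjI1])
    apply (simp only: mult_zero_left mult_zero_right add_0_left add_0_right mult_1_left diff_0_right of_nat_numeral power_one_right two)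
    apply (rule alg)
    using Dpos[OF s] by (simp_all add: D_def)
  obtain cG where cG: "\<forall>x\<in>J. (H x)\<^sup>2 / D x = cG"
    using has_field_derivative_zero_constant[OF convJ Gd] by blast
  have H0: "H s = 0" if s: "s \<in> J" for s
  proof -
    have "H 0 = 0" by (simp add: H_def B_def)
    then have "(H s)\<^sup>2 / D s = 0" using cG s J(2) by force
    then show ?thesis using Dpos[OF s] by simp
  qed
  have Bcont: "continuous_on J B"
    by (rule DERIV_continuous_on[where D="\<lambda>x. \<tau> * W\<^sup>2 / D x"]) (rule Bd)
  have Bprop: "cos (B s) \<noteq> 0 \<and> tan (B s) = \<tau> / W * tan (W * s)"
    if s: "s \<in> J" "cos (W * s) \<noteq> 0" for s
  proof -
    have h: "W * sin (B s) * cos (W * s) = \<tau> * cos (B s) * sin (W * s)"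
      using H0[OF s(1)] by (simp add: H_def)
    have cB: "cos (B s) \<noteq> 0"
    proof
      assume c0: "cos (B s) = 0"
      then have "sin (B s) \<noteq> 0" using sin_cos_squared_add[of "B s"] by auto
      then show False using h c0 W0 s(2) by simp
    qed
    then show ?thesis using h W0 s(2) by (simp add: tan_def field_simps)
  qed
  have branch: "continuous_arctan_branch J \<tau> W B"
    unfolding continuous_arctan_branch_def using Bcont Bprop by (simp add: B_def)
  have uniq: "A s = B s" if A: "continuous_arctan_branch J \<tau> W A" and s: "s \<in> J" for A s
  proof -
    from A have Ac: "continuous_on J A" and A0: "A 0 = 0"
      and At: "\<And>s. s \<in> J \<Longrightarrow> cos (W * s) \<noteq> 0 \<Longrightarrow> tan (A s) = \<tau> / W * tan (W * s)"
      unfolding continuous_arctan_branch_def by auto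
    define C where "C x = A x - B x" for x
    have Cc: "continuous_on J C" unfolding C_def using Ac Bcont by (intro continuous_intros)
    have gc: "continuous_on J (\<lambda>x. sin (2 * C x))" using Cc by (intro continuous_intros)
    have g1: "sin (2 * C x) = 0" if x: "x \<in> J" "cos (W * x) \<noteq> 0" for x
    proof -
      have tAB: "tan (A x) = tan (B x)" and cB: "cos (B x) \<noteq> 0" using At[OF x] Bprop[OF x] by auto
      show ?thesis
      proof (cases "cos (A x) = 0")
        case True
        then have "tan (B x) = 0" using tAB by (simp add: tan_def)
        then have "sin (B x) = 0" using cB by (simp add: tan_def)
        then have s2B: "sin (2 * B x) = 0" by (simp add: sin_double)
        have s2A: "sin (2 * A x) = 0" using True by (simp add: sin_double)
        show ?thesis unfolding C_def right_diff_distrib sin_diff s2A s2B by simp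
      next
        case False
        then have "sin (A x) * cos (B x) - cos (A x) * sin (B x) = 0"
          using tAB cB False by (simp add: tan_def frac_eq_eq algebra_simps)
        then have "sin (A x - B x) = 0" by (simp add: sin_diff)
        then show ?thesis unfolding C_def sin_double by simp
      qed
    qed
    have g: "sin (2 * C x) = 0" if x: "x \<in> J" for x
    proof (cases "cos (W * x) = 0")
      case False then show ?thesis using g1 x by blast
    next
      case True
      have x0: "x \<noteq> 0" using True by auto
      have sWx: "sin (W * x) \<noteq> 0" using True sin_cos_squared_add[of "W * x"] by auto
      let ?S = "{y\<in>J. cos (W * y) \<noteq> 0}"
      have lim: "x islimpt ?S"
        unfolding islimpt_approachable
      proof (intro allI impI)
        fix e :: real assume e: "e > 0"
        define h where "h = min (1/2) (min (e / (2 * \<bar>x\<bar>)) (1 / (W * \<bar>x\<bar>)))"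
        have h0: "h > 0" using e x0 W0 by (simp add: h_def)
        have h1: "h \<le> 1/2" "h \<le> e / (2 * \<bar>x\<bar>)" "h \<le> 1 / (W * \<bar>x\<bar>)" by (simp_all add: h_def)
        define y where "y = (1 - h) * x"
        have yJ: "y \<in> J"
        proof (cases "x > 0")
          case True
          then have "0 \<le> y" "y \<le> x" using h0 h1 by (simp_all add: y_def mult_le_cancel_right1)
          then show ?thesis using mem_is_interval_1_I[OF J(1) J(2) x] by blast
        next
          case False
          then have "x \<le> y" "y \<le> 0" using h0 h1 x0
            by (simp_all add: y_def mult_le_0_iff mult_le_cancel_right1)
          then show ?thesis using mem_is_interval_1_I[OF J(1) x J(2)] by blast
        qed
        have yx: "y - x = - (h * x)" by (simp add: y_def algebra_simps)
        have "y \<noteq> x" using yx h0 x0 by auto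
        moreover have "dist y x < e"
        proof -
          have "dist y x = h * \<bar>x\<bar>" using yx h0 by (simp add: dist_real_def abs_mult)
          also have "\<dots> \<le> e / 2" using h1(2) x0 by (simp add: field_simps)
          finally show ?thesis using e by simp
        qed
        moreover have "cos (W * y) \<noteq> 0"
        proof -
          define z where "z = h * W * x"
          have Wy: "W * y = W * x - z" by (simp add: y_def z_def algebra_simps)
          have z0: "z \<noteq> 0" using h0 W0 x0 by (simp add: z_def)
          have zb: "\<bar>z\<bar> \<le> 1"
          proof -
            have "\<bar>z\<bar> = h * (W * \<bar>x\<bar>)" using h0 W0 by (simp add: z_def abs_mult)
            also have "\<dots> \<le> 1" using h1(3) W0 x0 by (simp add: field_simps)
            finally show ?thesis .
          qed
          have sz: "sin z \<noteq> 0"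
          proof (cases "z > 0")
            case True then show ?thesis using zb pi_gt3 by (intro less_imp_neq[symmetric] sin_gt_zero) auto
          next
            case False
            then have "sin (- z) > 0" using zb z0 pi_gt3 by (intro sin_gt_zero) auto
            then show ?thesis by auto
          qed
          show ?thesis unfolding Wy cos_diff using True sWx sz by simp
        qed
        ultimately show "\<exists>x'\<in>?S. x' \<noteq> x \<and> dist x' x < e" using yJ by blast
      qed
      have F: "at x within ?S \<noteq> bot" using lim trivial_limit_within by blast
      have t1: "((\<lambda>y. sin (2 * C y)) \<longlongrightarrow> sin (2 * C x)) (at x within ?S)"
      proof -
        have "((\<lambda>y. sin (2 * C y)) \<longlongrightarrow> sin (2 * C x)) (at x within J)"
          using gc x unfolding continuous_on_def by blast
        then show ?thesis by (rule tendsto_within_subset) auto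
      qed
      have t2: "((\<lambda>y. sin (2 * C y)) \<longlongrightarrow> 0) (at x within ?S)"
      proof (rule tendsto_eventually)
        show "\<forall>\<^sub>F y in at x within ?S. sin (2 * C y) = 0"
          unfolding eventually_at_filter by (rule always_eventually) (simp add: g1)
      qed
      show ?thesis using tendsto_unique[OF F t1 t2] .
    qed
    have C0: "C 0 = 0" by (simp add: C_def A0 B_def)
    have conn: "connected (C ` J)"
      by (rule connected_continuous_image[OF Cc is_interval_connected[OF J(1)]])
    have "C s = 0"
    proof (rule ccontr)
      assume ne: "C s \<noteq> 0"
      have gs: "sin (2 * C s) = 0" using g s by blast
      consider "C s > 0" | "C s < 0" using ne by linarith
      then show False
      proof cases
        case 1
        have "C s \<ge> pi / 2"
        proof (rule ccontr)
          assume "\<not> C s \<ge> pi / 2"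
          then have "sin (2 * C s) > 0" using 1 by (intro sin_gt_zero) auto
          with gs show False by simp
        qed
        then have "pi / 4 \<in> {C 0 .. C s}" unfolding C0 atLeastAtMost_iff using pi_gt_zero by linarith
        then have "pi / 4 \<in> C ` J" using connected_contains_Icc[OF conn] J(2) s by blast
        then obtain t where t: "t \<in> J" "C t = pi / 4" by auto
        then have "2 * C t = pi / 2" by simp
        then have "sin (2 * C t) = 1" by (simp only: sin_pi_half)
        with g[OF t(1)] show False by simp
      next
        case 2
        have "C s \<le> - pi / 2"
        proof (rule ccontr)
          assume "\<not> C s \<le> - pi / 2"
          then have "sin (- (2 * C s)) > 0" using 2 by (intro sin_gt_zero) auto
          with gs show False by simp
        qed
        then have "- pi / 4 \<in> {C s .. C 0}" unfolding C0 atLeastAtMost_iff using pi_gt_zero by linarith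
        then have "- pi / 4 \<in> C ` J" using connected_contains_Icc[OF conn] J(2) s by blast
        then obtain t where t: "t \<in> J" "C t = - pi / 4" by auto
        then have "2 * C t = - (pi / 2)" by simp
        then have "sin (2 * C t) = - 1" by (simp only: sin_minus sin_pi_half)
        with g[OF t(1)] show False by simp
      qed
    qed
    then show ?thesis by (simp add: C_def)
  qed
  show ?thesis unfolding W_def[symmetric]
  proof (intro conjI allI impI ballI)
    show "\<exists>A. continuous_arctan_branch J \<tau> W A" using branch by blast
    fix A s assume "continuous_arctan_branch J \<tau> W A" "s \<in> J"
    then show "ph s - ph 0 = A s - \<tau> * s" using uniq[of A s] by (simp add: B_def)
  qed
qed
end
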